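(* Suppose the observation probability matrix $P=(p_{ij})$ is correctly specified and the weights are properly assigned, and let $R$ be any symmetric scoring function with a continuous distribution. For a test location $(i_\ast,j_\ast)$ with $(i_\ast,j_\ast)\mid\Omega_{\mathrm{obs}}\sim\mathrm{Unif}(\Omega^c_{\mathrm{obs}})$, the full conformal interval $\widehat{C}$ satisfies $$\mathbb{P}\{X_{i_\ast j_\ast}\in\widehat{C}(i_\ast,j_\ast)\}=\mathbb{P}\{X_{i_\ast j_\ast}\in\widehat{X}_{i_\ast j_\ast}\pm q^\ast_{i_\ast j_\ast}\widehat{\sigma}_{i_\ast j_\ast}\}=\mathbb{P}\{R_{i_\ast j_\ast}\le q^\ast_{i_\ast j_\ast}\}\le1-\alpha+\omega_{\max},$$ where $q^\ast_{i_\ast j_\ast}=\mathrm{Quantile}_{1-\alpha}\big(\sum_{k=1}^{n_{\mathrm{cal}}+1}\omega_{i_kj_k}\delta_{R_{i_kj_k}}\big)$ and $\omega_{\max}=\max_k\omega_{i_kj_k}$.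
   Context: $X\in\mathbb{R}^{d_1\times d_2}$ is fixed. Independent $Z_{ij}\sim\mathrm{Bern}(p_{ij})$ with nonzero $p_{ij}$ define the observed set $\Omega_{\mathrm{obs}}=\{Z_{ij}=1\}$. The calibration points $(i_1,j_1),\ldots,(i_{n_{\mathrm{cal}}},j_{n_{\mathrm{cal}}})$ are the observed indices retained for calibration (uncorrupted observed entries), and $(i_{n_{\mathrm{cal}}+1},j_{n_{\mathrm{cal}}+1})=(i_\ast,j_\ast)$ is the test point. Properly assigned weights: $\omega_{i_kj_k}=h_{i_kj_k}/\sum_{k'=1}^{n_{\mathrm{cal}}+1}h_{i_{k'}j_{k'}}$, $h_{ij}=(1-p_{ij})/p_{ij}$. $\widehat{X}$ and $\widehat{\sigma}_{ij}>0$ are estimates and the score is $R_{ij}=|X_{ij}-\widehat{X}_{ij}|/\widehat{\sigma}_{ij}$, computed symmetrically in the $n_{\mathrm{cal}}+1$ points. $\mathrm{Quantile}_{1-\alpha}(\mu)=\inf\{t:\mu((-\infty,t])\ge1-\alpha\}$ for a discrete probability measure $\mu$; $\delta_t$ is the point mass at $t$; $\widehat{C}(i_\ast,j_\ast)=[\widehat{X}_{i_\ast j_\ast}-q^\ast_{i_\ast j_\ast}\widehat{\sigma}_{i_\ast j_\ast},\widehat{X}_{i_\ast j_\ast}+q^\ast_{i_\ast j_\ast}\widehat{\sigma}_{i_\ast j_\ast}]$. *)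

theory Defs
  imports "HOL-Probability.Probability"
begin

definition grid :: "nat \<Rightarrow> nat \<Rightarrow> (nat \<times> nat) set" where
  "grid d1 d2 = {..<d1} \<times> {..<d2}"

definition obs_pmf :: "(nat \<times> nat) set \<Rightarrow> (nat \<times> nat \<Rightarrow> real) \<Rightarrow> (nat \<times> nat) set pmf" where
  "obs_pmf I p = map_pmf (\<lambda>Z. {ij \<in> I. Z ij}) (Pi_pmf I False (\<lambda>ij. bernoulli_pmf (p ij)))"

text \<open>Joint law of (Omega_obs, test point): the test point given Omega_obs is uniform on the
  unobserved entries (conditioning on there being at least one unobserved entry, so that
  a test point exists).\<close>
definition obs_test_pmf ::
  "(nat \<times> nat) set \<Rightarrow> (nat \<times> nat \<Rightarrow> real) \<Rightarrow> ((nat \<times> nat) set \<times> (nat \<times> nat)) pmf" where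
  "obs_test_pmf I p =
     cond_pmf (obs_pmf I p) {S. I - S \<noteq> {}} \<bind> (\<lambda>S. pmf_of_set (I - S) \<bind> (\<lambda>t. return_pmf (S, t)))"

definition odds :: "(nat \<times> nat \<Rightarrow> real) \<Rightarrow> nat \<times> nat \<Rightarrow> real" where
  "odds p ij = (1 - p ij) / p ij"

text \<open>Properly assigned weights on the n_cal + 1 points T (calibration points and test point).\<close>
definition cweight :: "(nat \<times> nat \<Rightarrow> real) \<Rightarrow> (nat \<times> nat) set \<Rightarrow> nat \<times> nat \<Rightarrow> real" where
  "cweight p T ij = odds p ij / (\<Sum>k\<in>T. odds p k)"

text \<open>Quantile_{1-alpha} of the discrete measure sum_{k in T} w k * delta_{r k}:
  inf {t. mu((-inf, t]) >= 1 - alpha}.\<close>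
definition wquantile :: "real \<Rightarrow> ('a \<Rightarrow> real) \<Rightarrow> ('a \<Rightarrow> real) \<Rightarrow> 'a set \<Rightarrow> real" where
  "wquantile \<alpha> w r T = Inf {t. (\<Sum>k\<in>{k\<in>T. r k \<le> t}. w k) \<ge> 1 - \<alpha>}"

end

theory Submission
  imports Defs
begin


lemma pmf_obs:
  assumes fin: "finite I" and p01: "\<And>i. i \<in> I \<Longrightarrow> 0 \<le> p i \<and> p i \<le> 1"
  shows "pmf (obs_pmf I p) S = (if S \<subseteq> I then (\<Prod>i\<in>S. p i) * (\<Prod>i\<in>I-S. 1 - p i) else 0)"
proof -
  let ?P = "Pi_pmf I False (\<lambda>ij. bernoulli_pmf (p ij))"
  let ?g = "\<lambda>Z. {ij \<in> I. Z ij}"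
  let ?D = "{f. \<forall>x. x \<notin> I \<longrightarrow> f x = False}"
  have "pmf (obs_pmf I p) S = measure ?P (?g -` {S})"
    unfolding obs_pmf_def by (rule pmf_map)
  also have "\<dots> = measure ?P (?g -` {S} \<inter> set_pmf ?P)" by (simp add: measure_Int_set_pmf)
  also have "?g -` {S} \<inter> set_pmf ?P = (?g -` {S} \<inter> ?D) \<inter> set_pmf ?P"
    using set_Pi_pmf_subset[OF fin, of False] by blast
  also have "?g -` {S} \<inter> ?D = (if S \<subseteq> I then {(\<lambda>x. x \<in> S)} else {})"
    by (auto simp: fun_eq_iff) blast+
  finally have "pmf (obs_pmf I p) S = (if S \<subseteq> I then pmf ?P (\<lambda>x. x \<in> S) else 0)"
    by (simp add: measure_Int_set_pmf measure_pmf_single)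
  also have "\<dots> = (if S \<subseteq> I then (\<Prod>i\<in>I. pmf (bernoulli_pmf (p i)) (i \<in> S)) else 0)"
    using fin by (auto intro!: pmf_Pi')
  also have "\<dots> = (if S \<subseteq> I then (\<Prod>i\<in>S. p i) * (\<Prod>i\<in>I-S. 1 - p i) else 0)"
  proof (cases "S \<subseteq> I")
    case True
    have "(\<Prod>i\<in>I. pmf (bernoulli_pmf (p i)) (i \<in> S)) = 
      (\<Prod>i\<in>S. pmf (bernoulli_pmf (p i)) (i \<in> S)) * (\<Prod>i\<in>I-S. pmf (bernoulli_pmf (p i)) (i \<in> S))"
      using True fin by (metis (no_types, lifting) mult.commute prod.subset_diff)
    also have "\<dots> = (\<Prod>i\<in>S. p i) * (\<Prod>i\<in>I-S. 1 - p i)"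
      using True p01 by (auto intro!: arg_cong2[where f="(*)"] prod.cong)
    finally show ?thesis using True by simp
  qed simp
  finally show ?thesis .
qed



lemma wq_bound:
  fixes w r :: "'a \<Rightarrow> real"
  assumes fin: "finite T" and ne: "T \<noteq> {}" and wnn: "\<And>k. k \<in> T \<Longrightarrow> 0 \<le> w k"
    and w1: "sum w T = 1" and inj: "inj_on r T" and a0: "0 < \<alpha>" and a1: "\<alpha> < 1"
  shows "sum w {k\<in>T. r k \<le> wquantile \<alpha> w r T} \<le> 1 - \<alpha> + Max (w ` T)"
proof -
  define F where "F x = sum w {k\<in>T. r k \<le> x}" for x
  define B where "B = {x. F x \<ge> 1 - \<alpha>}"
  define q where "q = wquantile \<alpha> w r T"
  have qB: "q = Inf B" unfolding q_def wquantile_def B_def F_def by simp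
  have "Max (r ` T) \<in> B"
  proof -
    have "{k\<in>T. r k \<le> Max (r ` T)} = T" using fin by auto
    then show ?thesis using w1 a0 unfolding B_def F_def by simp
  qed
  hence Bne: "B \<noteq> {}" by blast
  have bdd: "bdd_below B"
  proof (rule bdd_belowI[of _ "Min (r ` T)"])
    fix x assume "x \<in> B"
    hence "F x \<ge> 1 - \<alpha>" by (simp add: B_def)
    hence "{k\<in>T. r k \<le> x} \<noteq> {}" using a1 unfolding F_def by (metis diff_gt_0_iff_gt leD sum.empty)
    then obtain k where "k \<in> T" "r k \<le> x" by auto
    thus "Min (r ` T) \<le> x" using fin by (meson Min_le dual_order.trans finite_imageI imageI)
  qed
  have below: "F x < 1 - \<alpha>" if "x < q" for x
  proof (rule ccontr)
    assume "\<not> F x < 1 - \<alpha>"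
    hence "x \<in> B" by (simp add: B_def)
    hence "q \<le> x" using bdd qB by (simp add: cInf_lower)
    thus False using that by simp
  qed
  define L where "L = {k\<in>T. r k < q}"
  define E where "E = {k\<in>T. r k = q}"
  have finL: "finite L" and finE: "finite E" using fin by (auto simp: L_def E_def)
  have sL: "sum w L \<le> 1 - \<alpha>"
  proof (cases "L = {}")
    case True thus ?thesis using a1 by simp
  next
    case False
    define x where "x = Max (r ` L)"
    have "x \<in> r ` L" unfolding x_def using False finL by (intro Max_in) auto
    hence xq: "x < q" by (auto simp: L_def)
    have "{k\<in>T. r k \<le> x} = L"
    proof
      show "{k\<in>T. r k \<le> x} \<subseteq> L" using xq by (auto simp: L_def)
      show "L \<subseteq> {k\<in>T. r k \<le> x}" unfolding x_def using finL by (auto simp: L_def)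
    qed
    thus ?thesis using below[OF xq] unfolding F_def by simp
  qed
  have sE: "sum w E \<le> Max (w ` T)"
  proof (cases "E = {}")
    case True
    from ne obtain k where "k \<in> T" by auto
    hence "w k \<le> Max (w ` T)" using fin by auto
    thus ?thesis using True wnn[OF \<open>k \<in> T\<close>] by simp
  next
    case False
    then obtain k where k: "k \<in> E" by auto
    have "E = {k}"
    proof
      show "E \<subseteq> {k}" using k inj by (auto simp: E_def inj_on_def)
    qed (use k in auto)
    moreover have "w k \<le> Max (w ` T)" using fin k by (auto simp: E_def)
    ultimately show ?thesis by simp
  qed
  have "{k\<in>T. r k \<le> q} = L \<union> E" by (auto simp: L_def E_def)
  moreover have "L \<inter> E = {}" by (auto simp: L_def E_def)
  ultimately have "sum w {k\<in>T. r k \<le> q} = sum w L + sum w E"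
    using finL finE by (simp add: sum.union_disjoint)
  thus ?thesis using sL sE q_def by simp
qed



lemma pmf_M:
  assumes fin: "finite I" and pos: "set_pmf (obs_pmf I p) \<inter> {S. I - S \<noteq> {}} \<noteq> {}"
  shows "pmf (obs_test_pmf I p) (S, t) =
    (if t \<in> I - S then pmf (obs_pmf I p) S / measure (obs_pmf I p) {S. I - S \<noteq> {}} / card (I - S) else 0)"
proof -
  let ?N = "cond_pmf (obs_pmf I p) {S. I - S \<noteq> {}}"
  have inner: "pmf (pmf_of_set (I - S') \<bind> (\<lambda>t. return_pmf (S', t))) (S, t) =
      indicator {S} S' * pmf (pmf_of_set (I - S)) t" for S'
  proof -
    have "pmf (pmf_of_set (I - S') \<bind> (\<lambda>t. return_pmf (S', t))) (S, t)
        = pmf (map_pmf (Pair S') (pmf_of_set (I - S'))) (S, t)"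
      by (simp add: map_pmf_def)
    also have "\<dots> = measure (pmf_of_set (I - S')) (Pair S' -` {(S, t)})" by (rule pmf_map)
    also have "Pair S' -` {(S, t)} = (if S' = S then {t} else {})" by auto
    finally show ?thesis by (auto simp: measure_pmf_single)
  qed
  have "pmf (obs_test_pmf I p) (S, t) = (\<integral>S'. indicator {S} S' * pmf (pmf_of_set (I - S)) t \<partial>?N)"
    unfolding obs_test_pmf_def pmf_bind[of ?N] inner ..
  also have "\<dots> = pmf ?N S * pmf (pmf_of_set (I - S)) t"
    by (subst integral_measure_pmf[where A="{S}"]) (auto simp: indicator_def)
  also have "\<dots> = (if t \<in> I - S then pmf (obs_pmf I p) S / measure (obs_pmf I p) {S. I - S \<noteq> {}} / card (I - S) else 0)"
  proof (cases "I - S = {}")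
    case True
    thus ?thesis by (subst pmf_cond[OF pos]) auto
  next
    case False
    thus ?thesis using fin by (subst pmf_cond[OF pos]) auto
  qed
  finally show ?thesis .
qed

lemma set_M:
  assumes fin: "finite I" and pos: "set_pmf (obs_pmf I p) \<inter> {S. I - S \<noteq> {}} \<noteq> {}"
  shows "set_pmf (obs_test_pmf I p) \<subseteq> Sigma (Pow I) (\<lambda>S. I - S)"
proof
  fix x assume that: "x \<in> set_pmf (obs_test_pmf I p)"
    obtain S t where x: "x = (S, t)" by (metis surj_pair)
    have "pmf (obs_test_pmf I p) (S, t) \<noteq> 0" using that x by (simp add: set_pmf_eq)
    hence "t \<in> I - S" "pmf (obs_pmf I p) S \<noteq> 0" using pmf_M[OF fin pos, of S t]
      by (auto split: if_splits)
    hence "S \<in> set_pmf (obs_pmf I p)" by (simp add: set_pmf_eq)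
    hence "S \<subseteq> I" unfolding obs_pmf_def by auto
    thus "x \<in> Sigma (Pow I) (\<lambda>S. I - S)" using x \<open>t \<in> I - S\<close> by auto
qed

lemma exp_M:
  fixes f :: "(nat \<times> nat) set \<times> (nat \<times> nat) \<Rightarrow> real"
  assumes fin: "finite I" and pos: "set_pmf (obs_pmf I p) \<inter> {S. I - S \<noteq> {}} \<noteq> {}"
  shows "measure_pmf.expectation (obs_test_pmf I p) f =
    (\<Sum>T\<in>Pow I. \<Sum>t\<in>T. pmf (obs_test_pmf I p) (T - {t}, t) * f (T - {t}, t))"
proof -
  let ?M = "obs_test_pmf I p"
  have sub: "x \<in> Sigma (Pow I) (\<lambda>S. I - S)" if "x \<in> set_pmf ?M" for x
  proof -
    obtain S t where x: "x = (S, t)" by (metis surj_pair)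
    have "pmf ?M (S, t) \<noteq> 0" using that x by (simp add: set_pmf_eq)
    hence "t \<in> I - S" "pmf (obs_pmf I p) S \<noteq> 0" using pmf_M[OF fin pos, of S t]
      by (auto split: if_splits)
    hence "S \<in> set_pmf (obs_pmf I p)" by (simp add: set_pmf_eq)
    hence "S \<subseteq> I" unfolding obs_pmf_def by auto
    thus ?thesis using x \<open>t \<in> I - S\<close> by auto
  qed
  have "measure_pmf.expectation ?M f = (\<Sum>x\<in>Sigma (Pow I) (\<lambda>S. I - S). pmf ?M x * f x)"
    using fin sub by (subst integral_measure_pmf[where A="Sigma (Pow I) (\<lambda>S. I - S)"]) auto
  also have "\<dots> = (\<Sum>x\<in>Sigma (Pow I) (\<lambda>T. T). pmf ?M (fst x - {snd x}, snd x) * f (fst x - {snd x}, snd x))"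
    by (rule sum.reindex_bij_witness[where j="\<lambda>(S, t). (insert t S, t)" and i="\<lambda>(T, t). (T - {t}, t)"])
       (force simp: insert_absorb)+
  also have "\<dots> = (\<Sum>T\<in>Pow I. \<Sum>t\<in>T. pmf ?M (T - {t}, t) * f (T - {t}, t))"
    using fin by (subst sum.Sigma) (auto simp: split_def intro: finite_subset)
  finally show ?thesis .
qed



lemma cancel_aux:
  fixes a b c z n pt :: real
  assumes "pt \<noteq> 0"
  shows "a * (b * c) / z / n = pt * a * c / z / n * (b / pt)"
  using assms by (cases "z = 0"; cases "n = 0") (simp_all add: field_simps)

lemma pmf_M_T:
  assumes fin: "finite I" and pos: "set_pmf (obs_pmf I p) \<inter> {S. I - S \<noteq> {}} \<noteq> {}"
    and p01: "\<And>i. i \<in> I \<Longrightarrow> 0 < p i \<and> p i \<le> 1"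
    and TI: "T \<subseteq> I" and tT: "t \<in> T"
  shows "pmf (obs_test_pmf I p) (T - {t}, t) =
    ((\<Prod>i\<in>T. p i) * (\<Prod>i\<in>I-T. 1 - p i)) / measure (obs_pmf I p) {S. I - S \<noteq> {}}
       / (card (I - T) + 1) * odds p t"
proof -
  have finT: "finite T" using fin TI finite_subset by blast
  have e1: "I - (T - {t}) = insert t (I - T)" using TI tT by auto
  have tn: "t \<notin> I - T" using tT by auto
  have pt: "p t > 0" using p01[of t] TI tT by blast
  have c: "card (I - (T - {t})) = card (I - T) + 1" using e1 tn fin by simp
  have pr: "(\<Prod>i\<in>T. p i) = p t * (\<Prod>i\<in>T-{t}. p i)" using finT tT by (simp add: prod.remove)
  have pr2: "(\<Prod>i\<in>I - (T - {t}). 1 - p i) = (1 - p t) * (\<Prod>i\<in>I - T. 1 - p i)"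
    unfolding e1 using fin tn by simp
  have "pmf (obs_test_pmf I p) (T - {t}, t) = pmf (obs_pmf I p) (T - {t}) / measure (obs_pmf I p) {S. I - S \<noteq> {}} / card (I - (T - {t}))"
    using pmf_M[OF fin pos, of "T - {t}" t] TI tT by auto
  also have "pmf (obs_pmf I p) (T - {t}) = (\<Prod>i\<in>T-{t}. p i) * (\<Prod>i\<in>I - (T - {t}). 1 - p i)"
  proof -
    have p01': "\<And>i. i \<in> I \<Longrightarrow> 0 \<le> p i \<and> p i \<le> 1" using p01 by (meson less_imp_le)
    show ?thesis using pmf_obs[OF fin p01', where S="T - {t}"] TI by auto
  qed
  finally show ?thesis unfolding c pr pr2 odds_def using pt cancel_aux
    by (metis (no_types, lifting) less_irrefl of_nat_Suc Suc_eq_plus1 of_nat_add of_nat_1)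
qed

lemma interval_iff:
  fixes x a q s :: real
  assumes "0 < s"
  shows "(x \<in> {a - q * s .. a + q * s}) = (\<bar>x - a\<bar> / s \<le> q)"
  using assms by (auto simp: pos_divide_le_eq abs_le_iff algebra_simps)



theorem lemma4:
  fixes d1 d2 :: nat
    and p :: "nat \<times> nat \<Rightarrow> real"
    and X :: "nat \<times> nat \<Rightarrow> real"
    and Xhat sigmahat :: "(nat \<times> nat) set \<Rightarrow> nat \<times> nat \<Rightarrow> real"
    and \<alpha> :: real
  assumes alpha: "0 < \<alpha>" "\<alpha> < 1"
    and p_pos: "\<And>ij. ij \<in> grid d1 d2 \<Longrightarrow> 0 < p ij"
    and p_le1: "\<And>ij. ij \<in> grid d1 d2 \<Longrightarrow> p ij \<le> 1"
    and unobs_possible: "\<exists>ij \<in> grid d1 d2. p ij < 1"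
    and sigma_pos: "\<And>T ij. 0 < sigmahat T ij"
    and continuous: "AE \<omega> in measure_pmf (obs_test_pmf (grid d1 d2) p).
        (let T = insert (snd \<omega>) (fst \<omega>)
         in inj_on (\<lambda>ij. \<bar>X ij - Xhat T ij\<bar> / sigmahat T ij) T)"
  shows
    "let M = obs_test_pmf (grid d1 d2) p;
         R = (\<lambda>T ij. \<bar>X ij - Xhat T ij\<bar> / sigmahat T ij);
         q = (\<lambda>T. wquantile \<alpha> (cweight p T) (R T) T)
     in measure_pmf.prob M
          {(S, t). X t \<in> {Xhat (insert t S) t - q (insert t S) * sigmahat (insert t S) t ..
                           Xhat (insert t S) t + q (insert t S) * sigmahat (insert t S) t}}
        = measure_pmf.prob M {(S, t). R (insert t S) t \<le> q (insert t S)}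
      \<and> measure_pmf.prob M {(S, t). R (insert t S) t \<le> q (insert t S)}
        \<le> 1 - \<alpha> + measure_pmf.expectation M
              (\<lambda>(S, t). Max (cweight p (insert t S) ` insert t S))"
proof -
  define I where "I = grid d1 d2"
  have fin: "finite I" unfolding I_def grid_def by simp
  have p01: "\<And>i. i \<in> I \<Longrightarrow> 0 < p i \<and> p i \<le> 1" using p_pos p_le1 unfolding I_def by blast
  have p01': "\<And>i. i \<in> I \<Longrightarrow> 0 \<le> p i \<and> p i \<le> 1" using p01 by (meson less_imp_le)
  obtain ij0 where ij0: "ij0 \<in> I" "p ij0 < 1" using unobs_possible unfolding I_def by blast
  define S0 where "S0 = I - {ij0}"
  have IS0: "I - S0 = {ij0}" using ij0 by (auto simp: S0_def)
  have "pmf (obs_pmf I p) S0 = (\<Prod>i\<in>S0. p i) * (\<Prod>i\<in>I-S0. 1 - p i)"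
    using pmf_obs[OF fin p01', where S=S0] by (simp add: S0_def)
  also have "\<dots> > 0"
  proof -
    have "(\<Prod>i\<in>S0. p i) > 0" by (intro prod_pos) (metis Diff_iff S0_def p01)
    moreover have "(\<Prod>i\<in>I-S0. 1 - p i) > 0" unfolding IS0 using ij0 by simp
    ultimately show ?thesis by simp
  qed
  finally have "S0 \<in> set_pmf (obs_pmf I p)" by (simp add: set_pmf_eq)
  hence pos: "set_pmf (obs_pmf I p) \<inter> {S. I - S \<noteq> {}} \<noteq> {}" using IS0 by blast
  define Z where "Z = measure (obs_pmf I p) {S. I - S \<noteq> {}}"
  have Zpos: "Z > 0" unfolding Z_def using \<open>S0 \<in> set_pmf (obs_pmf I p)\<close> IS0
    by (intro measure_pmf_posI) auto
  define M where "M = obs_test_pmf I p"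
  define R where "R = (\<lambda>T ij. \<bar>X ij - Xhat T ij\<bar> / sigmahat T ij)"
  define q where "q = (\<lambda>T. wquantile \<alpha> (cweight p T) (R T) T)"
  define A where "A = {(S, t). R (insert t S) t \<le> q (insert t S)}"
  define G where "G = (\<lambda>(S, t). Max (cweight p (insert t S) ` insert t S))"
  define K where "K T = ((\<Prod>i\<in>T. p i) * (\<Prod>i\<in>I-T. 1 - p i)) / Z / (card (I - T) + 1)" for T
  have part1: "measure_pmf.prob M
          {(S, t). X t \<in> {Xhat (insert t S) t - q (insert t S) * sigmahat (insert t S) t ..
                           Xhat (insert t S) t + q (insert t S) * sigmahat (insert t S) t}}
        = measure_pmf.prob M A"
  proof -
    have "{(S, t). X t \<in> {Xhat (insert t S) t - q (insert t S) * sigmahat (insert t S) t ..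
                           Xhat (insert t S) t + q (insert t S) * sigmahat (insert t S) t}} = A"
      unfolding A_def R_def using interval_iff[OF sigma_pos] by auto
    thus ?thesis by simp
  qed
  have inj: "\<And>x. x \<in> set_pmf M \<Longrightarrow> inj_on (R (insert (snd x) (fst x))) (insert (snd x) (fst x))"
    using continuous unfolding AE_measure_pmf_iff M_def R_def I_def Let_def by auto
  have odds_nn: "\<And>i. i \<in> I \<Longrightarrow> odds p i \<ge> 0"
    using p01 unfolding odds_def by (meson diff_ge_0_iff_ge divide_nonneg_pos)
  have KT: "\<And>T t. T \<subseteq> I \<Longrightarrow> t \<in> T \<Longrightarrow> pmf M (T - {t}, t) = K T * odds p t"
    unfolding M_def K_def Z_def using pmf_M_T[OF fin pos p01] by blast
  have Knn: "K T \<ge> 0" if "T \<subseteq> I" for T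
    unfolding K_def using that p01 Zpos
    by (intro divide_nonneg_nonneg mult_nonneg_nonneg prod_nonneg) (auto dest!: p01)
  have finM: "finite (set_pmf M)" unfolding M_def
    using set_M[OF fin pos] fin by (meson finite_Pow_iff finite_SigmaI finite_Diff finite_subset)
  have termw: "(\<Sum>t\<in>T. pmf M (T - {t}, t) * indicator A (T - {t}, t))
      \<le> (\<Sum>t\<in>T. pmf M (T - {t}, t) * (1 - \<alpha> + G (T - {t}, t)))" if TI: "T \<subseteq> I" for T
  proof -
    have finT: "finite T" using TI fin finite_subset by blast
    define mw where "mw = Max (cweight p T ` T)"
    define H where "H = sum (odds p) T"
    define sf where "sf = sum (odds p) {t\<in>T. R T t \<le> q T}"
    have ins: "\<And>t. t \<in> T \<Longrightarrow> insert t (T - {t}) = T" by auto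
    have "(\<Sum>t\<in>T. pmf M (T - {t}, t) * indicator A (T - {t}, t))
        = (\<Sum>t\<in>T. K T * (if R T t \<le> q T then odds p t else 0))"
    proof (rule sum.cong[OF refl])
      fix t assume tT: "t \<in> T"
      have "indicator A (T - {t}, t) = (if R T t \<le> q T then 1 else (0::real))"
        unfolding A_def indicator_def using ins[OF tT] by simp
      thus "pmf M (T - {t}, t) * indicator A (T - {t}, t) = K T * (if R T t \<le> q T then odds p t else 0)"
        using KT[OF TI tT] by simp
    qed
    also have "\<dots> = K T * sf" unfolding sf_def
      by (simp add: sum_distrib_left[symmetric] sum.inter_filter[OF finT])
    finally have L: "(\<Sum>t\<in>T. pmf M (T - {t}, t) * indicator A (T - {t}, t)) = K T * sf" .
    have "(\<Sum>t\<in>T. pmf M (T - {t}, t) * (1 - \<alpha> + G (T - {t}, t)))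
        = (\<Sum>t\<in>T. K T * (odds p t * (1 - \<alpha> + mw)))"
    proof (rule sum.cong[OF refl])
      fix t assume tT: "t \<in> T"
      have "G (T - {t}, t) = mw" unfolding G_def mw_def using ins[OF tT] by (simp del: image_insert insert_Diff_single)
      thus "pmf M (T - {t}, t) * (1 - \<alpha> + G (T - {t}, t)) = K T * (odds p t * (1 - \<alpha> + mw))"
        using KT[OF TI tT] by simp
    qed
    also have "\<dots> = K T * (H * (1 - \<alpha> + mw))"
      unfolding H_def by (simp add: sum_distrib_left[symmetric] sum_distrib_right[symmetric])
    finally have Rr: "(\<Sum>t\<in>T. pmf M (T - {t}, t) * (1 - \<alpha> + G (T - {t}, t))) = K T * (H * (1 - \<alpha> + mw))" .
    have sfH: "sf \<le> H" unfolding sf_def H_def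
      using finT TI odds_nn by (intro sum_mono2) auto
    have Hnn: "H \<ge> 0" unfolding H_def using TI odds_nn by (intro sum_nonneg) auto
    show ?thesis unfolding L Rr
    proof (cases "H = 0 \<or> K T = 0")
      case True
      thus "K T * sf \<le> K T * (H * (1 - \<alpha> + mw))"
        using sfH Knn[OF TI] by (auto simp: mult_nonneg_nonpos)
    next
      case False
      hence Hp: "H > 0" and Kp: "K T > 0" using Hnn Knn[OF TI] by auto
      obtain t0 where t0: "t0 \<in> T" "odds p t0 > 0"
      proof (rule ccontr)
        assume "\<not> thesis"
        hence "\<forall>t\<in>T. odds p t \<le> 0" using that by force
        hence "H \<le> 0" unfolding H_def by (simp add: sum_nonpos)
        thus False using Hp by simp
      qed
      have "pmf M (T - {t0}, t0) > 0" using KT[OF TI t0(1)] Kp t0(2) by simp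
      hence "(T - {t0}, t0) \<in> set_pmf M" by (simp add: set_pmf_eq)
      from inj[OF this] have injT: "inj_on (R T) T" using ins[OF t0(1)] by simp
      have cw: "cweight p T k = odds p k / H" for k unfolding cweight_def H_def ..
      have "sum (cweight p T) {k\<in>T. R T k \<le> wquantile \<alpha> (cweight p T) (R T) T} \<le> 1 - \<alpha> + mw"
        unfolding mw_def
      proof (rule wq_bound[OF finT _ _ _ injT alpha])
        show "T \<noteq> {}" using t0 by auto
        show "\<And>k. k \<in> T \<Longrightarrow> 0 \<le> cweight p T k" unfolding cw using odds_nn TI Hp by auto
        show "sum (cweight p T) T = 1" unfolding cw using Hp by (simp add: sum_divide_distrib[symmetric] H_def)
      qed
      hence "sf / H \<le> 1 - \<alpha> + mw" unfolding sf_def q_def cw by (simp add: sum_divide_distrib[symmetric])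
      hence "sf \<le> H * (1 - \<alpha> + mw)" using Hp by (simp add: divide_le_eq mult.commute)
      thus "K T * sf \<le> K T * (H * (1 - \<alpha> + mw))" using Kp by simp
    qed
  qed
  have "measure_pmf.prob M A = measure_pmf.expectation M (indicator A)" by simp
  also have "\<dots> = (\<Sum>T\<in>Pow I. \<Sum>t\<in>T. pmf M (T - {t}, t) * indicator A (T - {t}, t))"
    unfolding M_def by (rule exp_M[OF fin pos])
  also have "\<dots> \<le> (\<Sum>T\<in>Pow I. \<Sum>t\<in>T. pmf M (T - {t}, t) * (1 - \<alpha> + G (T - {t}, t)))"
    by (intro sum_mono termw) auto
  also have "\<dots> = measure_pmf.expectation M (\<lambda>x. 1 - \<alpha> + G x)"
    unfolding M_def by (rule exp_M[OF fin pos, symmetric])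
  also have "\<dots> = 1 - \<alpha> + measure_pmf.expectation M G"
    using finM by (subst Bochner_Integration.integral_add) (auto intro: integrable_measure_pmf_finite)
  finally have part2: "measure_pmf.prob M A \<le> 1 - \<alpha> + measure_pmf.expectation M G" .
  show ?thesis using part1 part2
    by (simp only: M_def R_def q_def A_def G_def I_def Let_def)
qed

end
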